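(* Let $(\mathbb{F}_i)_{i\ge0}$ be a filtration on $\mathcal{E}$ with ranges $\mathcal{F}_i$. (1) If $(P_i)_{i\ge0}$ is a stopping time, then there is $\tau\in\mathcal{E}^s$ with $\tau(K)\subseteq\{1,2,\dots\}\cup\{\infty\}$ such that $\{\tau=n\}$ is clopen and $\mathbf{1}_{\{\tau=n\}}\in\mathcal{F}_n$ for every $n\ge1$, and $P_nf=\mathbf{1}_{\{\tau\le n\}}f$ for all $f\in\mathcal{E}$ and $n\ge0$. (2) Conversely, if $\tau\in\mathcal{E}^s$ satisfies $\tau(K)\subseteq\{1,2,\dots\}\cup\{\infty\}$ and $\mathbf{1}_{\{\tau=n\}}\in\mathcal{F}_n$ for all $n\ge1$, then the operators $P_0=0$ and $P_nf=\mathbf{1}_{\{\tau\le n\}}f$ ($f\in\mathcal{E}$, $n\ge1$) form a stopping time.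
   Context: Let $\mathcal{E}$ be an order complete vector lattice with a weak order unit $E$, $K$ its Stone space (extremally disconnected compact Hausdorff), and $C^\infty(K)$ the vector lattice and f-algebra of continuous functions $K\to[-\infty,\infty]$ finite off a nowhere dense set (identified when equal off a nowhere dense set; operations pointwise), the universal completion of $\mathcal{E}$. Fix a Maeda–Ogasawara representation of $\mathcal{E}$ as an order dense ideal of $C^\infty(K)$ with $E$ corresponding to $\mathbf{1}$; band projections on $\mathcal{E}$ are exactly multiplications by $\mathbf{1}_W$ for clopen $W\subseteq K$. The sup-completion is $\mathcal{E}^s=\{f\in C(K,[-\infty,\infty]): f\ge g\text{ for some } g\in\mathcal{E}\}$. A conditional expectation on $\mathcal{E}$ is an order continuous, strictly positive linear projection $\mathbb{F}:\mathcal{E}\to\mathcal{E}$ whose range is an order complete vector sublattice of $\mathcal{E}$ and with $\mathbb{F}E=E$. A filtration is a family $(\mathbb{F}_i)_{i\ge0}$ of conditional expectations with $\mathbb{F}_s=\mathbb{F}_s\mathbb{F}_t=\mathbb{F}_t\mathbb{F}_s$ for $s\le t$; $\mathcal{F}_i$ is the range of $\mathbb{F}_i$. A stopping time (for this filtration) is an increasing sequence $(P_i)_{i\ge0}$ of band projections on $\mathcal{E}$ with $P_0=0$ and $\mathbb{F}_jP_i=P_i\mathbb{F}_j$ whenever $i\le j$. *)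

theory Defs
  imports "HOL-Analysis.Analysis"
begin

text \<open>Concrete Maeda--Ogasawara setting. Since K is extremally disconnected, two continuous functions
agreeing off a nowhere dense set agree everywhere, so no quotient is needed.\<close>

definition extremally_disconnected_space :: "'k::topological_space itself \<Rightarrow> bool" where
  "extremally_disconnected_space _ \<longleftrightarrow>
     compact (UNIV :: 'k set) \<and> (\<forall>U :: 'k set. open U \<longrightarrow> open (closure U))"

definition Cinf :: "('k::topological_space \<Rightarrow> ereal) set" where
  "Cinf = {f. continuous_on UNIV f \<and> interior {x. f x = \<infinity> \<or> f x = -\<infinity>} = {}}"

definition cadd :: "('k::topological_space \<Rightarrow> ereal) \<Rightarrow> ('k \<Rightarrow> ereal) \<Rightarrow> ('k \<Rightarrow> ereal)" where
  "cadd f g = (THE h. continuous_on UNIV h \<and>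
      (\<forall>x. f x \<noteq> \<infinity> \<and> f x \<noteq> -\<infinity> \<and> g x \<noteq> \<infinity> \<and> g x \<noteq> -\<infinity> \<longrightarrow> h x = f x + g x))"

definition cscale :: "real \<Rightarrow> ('k \<Rightarrow> ereal) \<Rightarrow> ('k \<Rightarrow> ereal)" where
  "cscale c f = (\<lambda>x. ereal c * f x)"

definition czero :: "'k \<Rightarrow> ereal" where "czero = (\<lambda>_. 0)"
definition cone :: "'k \<Rightarrow> ereal" where "cone = (\<lambda>_. 1)"

definition cind :: "'k set \<Rightarrow> ('k \<Rightarrow> ereal) \<Rightarrow> ('k \<Rightarrow> ereal)" where
  "cind W f = (\<lambda>x. indicator W x * f x)"

text \<open>E is an order dense ideal of C^infinity(K) containing the weak unit 1.\<close>
definition MO_space :: "('k::topological_space \<Rightarrow> ereal) set \<Rightarrow> bool" where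
  "MO_space E \<longleftrightarrow>
     E \<subseteq> Cinf \<and> cone \<in> E \<and> czero \<in> E \<and>
     (\<forall>f\<in>E. \<forall>g\<in>E. cadd f g \<in> E) \<and>
     (\<forall>c f. f \<in> E \<longrightarrow> cscale c f \<in> E) \<and>
     (\<forall>f\<in>E. \<forall>g\<in>Cinf. (\<forall>x. \<bar>g x\<bar> \<le> \<bar>f x\<bar>) \<longrightarrow> g \<in> E) \<and>
     (\<forall>g\<in>Cinf. czero \<le> g \<and> g \<noteq> czero \<longrightarrow> (\<exists>f\<in>E. czero \<le> f \<and> f \<noteq> czero \<and> f \<le> g))"

definition sup_completion :: "('k::topological_space \<Rightarrow> ereal) set \<Rightarrow> ('k \<Rightarrow> ereal) set" where
  "sup_completion E = {f. continuous_on UNIV f \<and> (\<exists>g\<in>E. g \<le> f)}"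

definition glb_in :: "('k \<Rightarrow> ereal) set \<Rightarrow> ('k \<Rightarrow> ereal) set \<Rightarrow> ('k \<Rightarrow> ereal) \<Rightarrow> bool" where
  "glb_in R S a \<longleftrightarrow> a \<in> R \<and> (\<forall>s\<in>S. a \<le> s) \<and> (\<forall>b\<in>R. (\<forall>s\<in>S. b \<le> s) \<longrightarrow> b \<le> a)"

definition lub_in :: "('k \<Rightarrow> ereal) set \<Rightarrow> ('k \<Rightarrow> ereal) set \<Rightarrow> ('k \<Rightarrow> ereal) \<Rightarrow> bool" where
  "lub_in R S a \<longleftrightarrow> a \<in> R \<and> (\<forall>s\<in>S. s \<le> a) \<and> (\<forall>b\<in>R. (\<forall>s\<in>S. s \<le> b) \<longrightarrow> a \<le> b)"

definition down_directed :: "('k \<Rightarrow> ereal) set \<Rightarrow> bool" where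
  "down_directed D \<longleftrightarrow> D \<noteq> {} \<and> (\<forall>a\<in>D. \<forall>b\<in>D. \<exists>c\<in>D. c \<le> a \<and> c \<le> b)"

definition order_continuous_on :: "('k \<Rightarrow> ereal) set \<Rightarrow> (('k \<Rightarrow> ereal) \<Rightarrow> ('k \<Rightarrow> ereal)) \<Rightarrow> bool" where
  "order_continuous_on E T \<longleftrightarrow>
     (\<forall>D. D \<subseteq> E \<and> down_directed D \<and> glb_in E D czero \<longrightarrow> glb_in E (T ` D) czero)"

definition cond_exp :: "('k::topological_space \<Rightarrow> ereal) set \<Rightarrow> (('k \<Rightarrow> ereal) \<Rightarrow> ('k \<Rightarrow> ereal)) \<Rightarrow> bool" where
  "cond_exp E T \<longleftrightarrow>
     (\<forall>f\<in>E. T f \<in> E) \<and>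
     (\<forall>f\<in>E. \<forall>g\<in>E. T (cadd f g) = cadd (T f) (T g)) \<and>
     (\<forall>c. \<forall>f\<in>E. T (cscale c f) = cscale c (T f)) \<and>
     (\<forall>f\<in>E. czero \<le> f \<and> f \<noteq> czero \<longrightarrow> czero \<le> T f \<and> T f \<noteq> czero) \<and>
     (\<forall>f\<in>E. T (T f) = T f) \<and>
     order_continuous_on E T \<and>
     (\<forall>f\<in>T ` E. \<forall>g\<in>T ` E. sup f g \<in> T ` E \<and> inf f g \<in> T ` E) \<and>
     (\<forall>S. S \<subseteq> T ` E \<and> S \<noteq> {} \<and> (\<exists>b\<in>T ` E. \<forall>s\<in>S. s \<le> b) \<longrightarrow> (\<exists>a. lub_in (T ` E) S a)) \<and>
     T cone = cone"

definition filtration :: "('k::topological_space \<Rightarrow> ereal) set \<Rightarrow> (nat \<Rightarrow> ('k \<Rightarrow> ereal) \<Rightarrow> ('k \<Rightarrow> ereal)) \<Rightarrow> bool" where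
  "filtration E F \<longleftrightarrow> (\<forall>i. cond_exp E (F i)) \<and>
     (\<forall>s t f. s \<le> t \<and> f \<in> E \<longrightarrow> F s f = F s (F t f) \<and> F s f = F t (F s f))"

text \<open>Band projections on E are exactly multiplications by indicators of clopen sets.\<close>
definition band_projection :: "('k::topological_space \<Rightarrow> ereal) set \<Rightarrow> (('k \<Rightarrow> ereal) \<Rightarrow> ('k \<Rightarrow> ereal)) \<Rightarrow> bool" where
  "band_projection E P \<longleftrightarrow> (\<exists>W. open W \<and> closed W \<and> (\<forall>f\<in>E. P f = cind W f))"

definition stopping_time :: "('k::topological_space \<Rightarrow> ereal) set \<Rightarrow> (nat \<Rightarrow> ('k \<Rightarrow> ereal) \<Rightarrow> ('k \<Rightarrow> ereal))
     \<Rightarrow> (nat \<Rightarrow> ('k \<Rightarrow> ereal) \<Rightarrow> ('k \<Rightarrow> ereal)) \<Rightarrow> bool" where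
  "stopping_time E F P \<longleftrightarrow>
     (\<forall>i. band_projection E (P i)) \<and>
     (\<forall>i j f. i \<le> j \<and> f \<in> E \<and> czero \<le> f \<longrightarrow> P i f \<le> P j f) \<and>
     (\<forall>f\<in>E. P 0 f = czero) \<and>
     (\<forall>i j f. i \<le> j \<and> f \<in> E \<longrightarrow> F j (P i f) = P i (F j f))"

end

theory Submission
  imports Defs
begin


lemma cont_order:
  fixes f :: "'k::topological_space \<Rightarrow> ereal"
  assumes "\<And>a. open {x. f x < a}" "\<And>a. open {x. a < f x}"
  shows "continuous_on UNIV f"
proof (rule continuous_on_generate_topology[OF open_generated_order])
  fix B :: "ereal set" assume "B \<in> range lessThan \<union> range greaterThan"
  then show "\<exists>C. open C \<and> C \<inter> UNIV = f -` B \<inter> UNIV"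
  proof
    assume "B \<in> range lessThan" then obtain a where "B = {..<a}" by auto
    then show ?thesis using assms(1)[of a] by (intro exI[of _ "{x. f x < a}"]) auto
  next
    assume "B \<in> range greaterThan" then obtain a where "B = {a<..}" by auto
    then show ?thesis using assms(2)[of a] by (intro exI[of _ "{x. a < f x}"]) auto
  qed
qed

lemma dense_eq:
  fixes a b :: "'k::topological_space \<Rightarrow> ereal"
  assumes "continuous_on UNIV a" "continuous_on UNIV b" "closure D = UNIV" "\<And>x. x \<in> D \<Longrightarrow> a x = b x"
  shows "a = b"
proof -
  have "closed {x. a x = b x}" by (rule closed_Collect_eq[OF assms(1,2)])
  moreover have "D \<subseteq> {x. a x = b x}" using assms(4) by auto
  ultimately have "closure D \<subseteq> {x. a x = b x}" by (rule closure_minimal[rotated])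
  then show ?thesis using assms(3) by auto
qed

lemma dense_le:
  fixes a b :: "'k::topological_space \<Rightarrow> ereal"
  assumes "continuous_on UNIV a" "continuous_on UNIV b" "closure D = UNIV" "\<And>x. x \<in> D \<Longrightarrow> a x \<le> b x"
  shows "a \<le> b"
proof -
  have "closed {x. a x \<le> b x}" by (rule closed_Collect_le[OF assms(1,2)])
  moreover have "D \<subseteq> {x. a x \<le> b x}" using assms(4) by auto
  ultimately have "closure D \<subseteq> {x. a x \<le> b x}" by (rule closure_minimal[rotated])
  then show ?thesis using assms(3) by (auto simp: le_fun_def)
qed

lemma dense_Int:
  assumes "open A" "closure A = UNIV" "closure B = UNIV"
  shows "closure (A \<inter> B) = UNIV"
proof -
  have "A \<subseteq> closure (A \<inter> B)" using open_Int_closure_subset[OF assms(1), of B] assms(3) by auto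
  then have "closure A \<subseteq> closure (A \<inter> B)" by (simp add: closure_minimal)
  then show ?thesis using assms(2) by auto
qed

lemma Cinf_cont: "f \<in> Cinf \<Longrightarrow> continuous_on UNIV f" by (simp add: Cinf_def)

lemma Cinf_fin_open:
  assumes "f \<in> Cinf" shows "open {x. \<bar>f x\<bar> \<noteq> \<infinity>}"
proof -
  have "{x. \<bar>f x\<bar> \<noteq> \<infinity>} = f -` {-\<infinity><..<\<infinity>}" 
  proof (rule set_eqI)
    fix x show "x \<in> {x. \<bar>f x\<bar> \<noteq> \<infinity>} \<longleftrightarrow> x \<in> f -` {-\<infinity><..<\<infinity>}" by (cases "f x") auto
  qed
  then show ?thesis using open_vimage[OF _ Cinf_cont[OF assms], of "{-\<infinity><..<\<infinity>}"] by auto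
qed

lemma Cinf_fin_dense:
  assumes "f \<in> Cinf" shows "closure {x. \<bar>f x\<bar> \<noteq> \<infinity>} = UNIV"
proof -
  have "{x. \<bar>f x\<bar> \<noteq> \<infinity>} = - {x. f x = \<infinity> \<or> f x = -\<infinity>}" by auto
  then show ?thesis using assms by (simp add: Cinf_def closure_complement)
qed

lemma ED_ext:
  fixes \<phi> :: "'k::topological_space \<Rightarrow> ereal"
  assumes K: "extremally_disconnected_space TYPE('k)"
    and U: "open U" "closure U = UNIV" and phi: "continuous_on U \<phi>"
  shows "\<exists>h. continuous_on UNIV h \<and> (\<forall>x\<in>U. h x = \<phi> x)"
proof -
  define C where "C r = closure {y\<in>U. \<phi> y < ereal r}" for r
  define h where "h x = Inf {ereal r | r. x \<in> C r}" for x
  have mono: "C r \<subseteq> C s" if "r \<le> s" for r s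
    unfolding C_def using that by (intro closure_mono) (auto simp: less_le_trans)
  have Copen: "open (C r)" for r
  proof -
    have "open (U \<inter> \<phi> -` {..<ereal r})" by (rule continuous_open_preimage[OF phi U(1)]) auto
    moreover have "U \<inter> \<phi> -` {..<ereal r} = {y\<in>U. \<phi> y < ereal r}" by auto
    ultimately show ?thesis using K unfolding C_def extremally_disconnected_space_def by auto
  qed
  have hle: "h x \<le> ereal r" if "x \<in> C r" for x r
    unfolding h_def using that by (intro Inf_lower) auto
  have lt: "h x < a \<longleftrightarrow> (\<exists>r. ereal r < a \<and> x \<in> C r)" for x a
  proof
    assume "h x < a" then obtain z where "z \<in> {ereal r | r. x \<in> C r}" "z < a"
      unfolding h_def by (auto simp: Inf_less_iff)
    then show "\<exists>r. ereal r < a \<and> x \<in> C r" by auto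
  next
    assume "\<exists>r. ereal r < a \<and> x \<in> C r"
    then show "h x < a" using hle le_less_trans by blast
  qed
  have gt: "a < h x \<longleftrightarrow> (\<exists>s. a < ereal s \<and> x \<notin> C s)" for x a
  proof
    assume "a < h x"
    then obtain s where s: "a < ereal s" "ereal s < h x" using ereal_dense2 by blast
    then have "x \<notin> C s" using hle[of x s] by auto
    then show "\<exists>s. a < ereal s \<and> x \<notin> C s" using s by auto
  next
    assume "\<exists>s. a < ereal s \<and> x \<notin> C s"
    then obtain s where s: "a < ereal s" "x \<notin> C s" by auto
    have "ereal s \<le> h x" unfolding h_def
    proof (rule Inf_greatest)
      fix z assume "z \<in> {ereal r | r. x \<in> C r}"
      then obtain r where "z = ereal r" "x \<in> C r" by auto
      then show "ereal s \<le> z" using mono[of r s] s(2) by (cases "r \<le> s") auto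
    qed
    then show "a < h x" using s(1) by auto
  qed
  have cont: "continuous_on UNIV h"
  proof (rule cont_order)
    fix a
    have e1: "{x. h x < a} = (\<Union>r\<in>{r. ereal r < a}. C r)" using lt by auto
    have "open (\<Union>r\<in>{r. ereal r < a}. C r)" by (intro open_UN ballI Copen)
    then show "open {x. h x < a}" unfolding e1 .
    have e: "{x. a < h x} = (\<Union>s\<in>{s. a < ereal s}. - C s)" using gt by auto
    have cl: "closed (C s)" for s unfolding C_def by (rule closed_closure)
    have "open (\<Union>s\<in>{s. a < ereal s}. - C s)" by (intro open_UN ballI open_Compl cl)
    then show "open {x. a < h x}" unfolding e .
  qed
  have agree: "h x = \<phi> x" if x: "x \<in> U" for x
  proof (rule antisym)
    show "h x \<le> \<phi> x"
    proof (rule ccontr)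
      assume "\<not> h x \<le> \<phi> x"
      then have "\<phi> x < h x" by simp
      then obtain r where r: "\<phi> x < ereal r" "ereal r < h x" using ereal_dense2 by blast
      have "x \<in> {y\<in>U. \<phi> y < ereal r}" using x r(1) by simp
      then have "x \<in> C r" unfolding C_def by (rule closure_subset[THEN subsetD])
      then have "h x \<le> ereal r" by (rule hle)
      then show False using r(2) by simp
    qed
    show "\<phi> x \<le> h x"
    proof (rule ccontr)
      assume "\<not> \<phi> x \<le> h x"
      then have "h x < \<phi> x" by simp
      then obtain r where r: "ereal r < \<phi> x" "x \<in> C r" using lt[of x "\<phi> x"] by blast
      define N where "N = U \<inter> \<phi> -` {ereal r<..}"
      have oN: "open N" unfolding N_def by (rule continuous_open_preimage[OF phi U(1)]) simp
      have "N \<inter> {y\<in>U. \<phi> y < ereal r} = {}" unfolding N_def by auto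
      then have "N \<inter> C r = {}" unfolding C_def using open_Int_closure_eq_empty[OF oN] by simp
      moreover have "x \<in> N" unfolding N_def using x r(1) by simp
      ultimately show False using r(2) by blast
    qed
  qed
  show ?thesis using cont agree by blast
qed




definition fin :: "ereal \<Rightarrow> bool" where "fin y \<longleftrightarrow> y \<noteq> \<infinity> \<and> y \<noteq> -\<infinity>"

lemma fin_abs: "fin y \<longleftrightarrow> \<bar>y\<bar> \<noteq> \<infinity>" by (cases y) (auto simp: fin_def)

lemma Cinf_fin_set:
  assumes "f \<in> Cinf" "g \<in> Cinf"
  shows "open {x. fin (f x) \<and> fin (g x)}" "closure {x. fin (f x) \<and> fin (g x)} = UNIV"
proof -
  have e: "{x. fin (f x) \<and> fin (g x)} = {x. \<bar>f x\<bar> \<noteq> \<infinity>} \<inter> {x. \<bar>g x\<bar> \<noteq> \<infinity>}" by (auto simp: fin_abs)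
  show "open {x. fin (f x) \<and> fin (g x)}" unfolding e using Cinf_fin_open assms by blast
  show "closure {x. fin (f x) \<and> fin (g x)} = UNIV" unfolding e
    using dense_Int Cinf_fin_open Cinf_fin_dense assms by blast
qed

lemma cadd_eqI:
  assumes "f \<in> Cinf" "g \<in> Cinf" "continuous_on UNIV h"
    and "\<And>x. fin (f x) \<Longrightarrow> fin (g x) \<Longrightarrow> h x = f x + g x"
  shows "cadd f g = h"
  unfolding cadd_def
proof (rule the_equality)
  show "continuous_on UNIV h \<and> (\<forall>x. f x \<noteq> \<infinity> \<and> f x \<noteq> - \<infinity> \<and> g x \<noteq> \<infinity> \<and> g x \<noteq> - \<infinity> \<longrightarrow> h x = f x + g x)"
    using assms by (auto simp: fin_def)
next
  fix h' assume h': "continuous_on UNIV h' \<and> (\<forall>x. f x \<noteq> \<infinity> \<and> f x \<noteq> - \<infinity> \<and> g x \<noteq> \<infinity> \<and> g x \<noteq> - \<infinity> \<longrightarrow> h' x = f x + g x)"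
  show "h' = h"
    by (rule dense_eq[OF _ assms(3) Cinf_fin_set(2)[OF assms(1,2)]]) (use h' assms(4) in \<open>auto simp: fin_def\<close>)
qed

lemma cadd_spec:
  assumes K: "extremally_disconnected_space TYPE('k::topological_space)"
    and f: "f \<in> Cinf" and g: "(g :: 'k \<Rightarrow> ereal) \<in> Cinf"
  shows "continuous_on UNIV (cadd f g) \<and> (\<forall>x. fin (f x) \<longrightarrow> fin (g x) \<longrightarrow> cadd f g x = f x + g x)"
proof -
  let ?U = "{x. fin (f x) \<and> fin (g x)}"
  have "continuous_on ?U (\<lambda>x. f x + g x)"
    unfolding continuous_on_def
  proof
    fix x assume x: "x \<in> ?U"
    have cf: "(f \<longlongrightarrow> f x) (at x within ?U)" "(g \<longlongrightarrow> g x) (at x within ?U)"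
      using continuous_on_subset[OF Cinf_cont[OF f], of ?U] continuous_on_subset[OF Cinf_cont[OF g], of ?U] x
      by (auto simp: continuous_on_def)
    show "((\<lambda>x. f x + g x) \<longlongrightarrow> f x + g x) (at x within ?U)"
      by (rule tendsto_add_ereal[OF _ _ cf]) (use x in \<open>auto simp: fin_abs\<close>)
  qed
  then obtain h where h: "continuous_on UNIV h" "\<forall>x\<in>?U. h x = f x + g x"
    using ED_ext[OF K Cinf_fin_set[OF f g]] by blast
  have "cadd f g = h" by (rule cadd_eqI[OF f g h(1)]) (use h(2) in auto)
  then show ?thesis using h by auto
qed




lemma cont_add_nonneg:
  fixes f g :: "'k::topological_space \<Rightarrow> ereal"
  assumes "continuous_on UNIV f" "continuous_on UNIV g" "\<And>x. f x \<noteq> -\<infinity>" "\<And>x. g x \<noteq> -\<infinity>"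
  shows "continuous_on UNIV (\<lambda>x. f x + g x)"
  using assms unfolding continuous_on_def by (auto intro!: tendsto_add_ereal_nonneg)

lemma cont_add_fin:
  fixes f g :: "'k::topological_space \<Rightarrow> ereal"
  assumes "continuous_on UNIV f" "continuous_on UNIV g" "\<And>x. fin (f x)" "\<And>x. fin (g x)"
  shows "continuous_on UNIV (\<lambda>x. f x + g x)"
  using assms unfolding continuous_on_def fin_abs by (metis tendsto_add_ereal)

lemma cont_If:
  fixes f :: "'k::topological_space \<Rightarrow> ereal"
  assumes "open W" "closed W" "continuous_on UNIV f" "continuous_on UNIV g"
  shows "continuous_on UNIV (\<lambda>x. if x \<in> W then f x else g x)"
proof -
  have "continuous_on (W \<union> -W) (\<lambda>x. if x \<in> W then f x else g x)"
    by (rule continuous_on_If) (use assms in \<open>auto intro: continuous_on_subset\<close>)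
  then show ?thesis by (simp add: Un_commute)
qed

lemma cind_If: "cind W f = (\<lambda>x. if x \<in> W then f x else 0)"
  by (auto simp: cind_def indicator_def fun_eq_iff)

lemma cont_cind:
  fixes f :: "'k::topological_space \<Rightarrow> ereal"
  assumes "open W" "closed W" "continuous_on UNIV f"
  shows "continuous_on UNIV (cind W f)"
  unfolding cind_If by (rule cont_If[OF assms]) auto

lemma Cinf_I:
  assumes "continuous_on UNIV f" "g \<in> Cinf" "\<And>x. fin (g x) \<Longrightarrow> fin (f x)"
  shows "f \<in> Cinf"
proof -
  have "{x. f x = \<infinity> \<or> f x = -\<infinity>} \<subseteq> {x. g x = \<infinity> \<or> g x = -\<infinity>}" using assms(3) by (auto simp: fin_def)
  then have "interior {x. f x = \<infinity> \<or> f x = -\<infinity>} \<subseteq> interior {x. g x = \<infinity> \<or> g x = -\<infinity>}" by (rule interior_mono)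
  then show ?thesis using assms by (auto simp: Cinf_def)
qed

lemma Cinf_fin:
  assumes "continuous_on UNIV f" "\<And>x. fin (f x)"
  shows "f \<in> Cinf"
  using assms by (auto simp: Cinf_def fin_def)

lemma cadd_nonneg:
  assumes "f \<in> Cinf" "g \<in> Cinf" "\<And>x. 0 \<le> f x" "\<And>x. 0 \<le> g x"
  shows "cadd f g = (\<lambda>x. f x + g x)"
proof (rule cadd_eqI[OF assms(1,2)])
  show "continuous_on UNIV (\<lambda>x. f x + g x)"
    by (rule cont_add_nonneg[OF Cinf_cont[OF assms(1)] Cinf_cont[OF assms(2)]])
       (use assms(3,4) in \<open>(metis MInfty_neq_ereal(1) ereal_infty_less_eq(2) zero_ereal_def)+\<close>)
qed auto

locale ce =
  fixes E :: "('k::t2_space \<Rightarrow> ereal) set" and T :: "('k \<Rightarrow> ereal) \<Rightarrow> ('k \<Rightarrow> ereal)"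
  assumes E: "MO_space E" and T: "cond_exp E T"
begin

lemma E_Cinf: "f \<in> E \<Longrightarrow> f \<in> Cinf" using E by (auto simp: MO_space_def)
lemma cone_E: "cone \<in> E" using E by (auto simp: MO_space_def)
lemma czero_E: "czero \<in> E" using E by (auto simp: MO_space_def)
lemma cadd_E: "f \<in> E \<Longrightarrow> g \<in> E \<Longrightarrow> cadd f g \<in> E" using E by (auto simp: MO_space_def)
lemma cscale_E: "f \<in> E \<Longrightarrow> cscale c f \<in> E" using E by (auto simp: MO_space_def)
lemma ideal: "f \<in> E \<Longrightarrow> g \<in> Cinf \<Longrightarrow> (\<And>x. \<bar>g x\<bar> \<le> \<bar>f x\<bar>) \<Longrightarrow> g \<in> E"
  using E unfolding MO_space_def by blast

lemma T_E: "f \<in> E \<Longrightarrow> T f \<in> E" using T by (auto simp: cond_exp_def)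
lemma T_add: "f \<in> E \<Longrightarrow> g \<in> E \<Longrightarrow> T (cadd f g) = cadd (T f) (T g)" using T by (auto simp: cond_exp_def)
lemma T_scale: "f \<in> E \<Longrightarrow> T (cscale c f) = cscale c (T f)" using T by (auto simp: cond_exp_def)
lemma T_idem: "f \<in> E \<Longrightarrow> T (T f) = T f" using T by (auto simp: cond_exp_def)
lemma T_cone: "T cone = cone" using T by (auto simp: cond_exp_def)
lemma T_oc: "order_continuous_on E T" using T by (auto simp: cond_exp_def)

lemma cscale0: "cscale 0 f = czero" by (auto simp: cscale_def czero_def fun_eq_iff zero_ereal_def[symmetric])

lemma T_zero: "T czero = czero"
  using T_scale[OF cone_E, of 0] by (simp add: cscale0)

lemma T_pos: "f \<in> E \<Longrightarrow> czero \<le> f \<Longrightarrow> czero \<le> T f"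
  using T T_zero by (cases "f = czero") (auto simp: cond_exp_def)

lemma T_pos': "f \<in> E \<Longrightarrow> (\<And>x. 0 \<le> f x) \<Longrightarrow> 0 \<le> T f x"
  using T_pos[of f] by (auto simp: czero_def le_fun_def)

end




lemma dm_mono: "k \<le> (M::nat) \<Longrightarrow> max (a::ereal) (ereal (real M)) + ereal (- real M) \<le> max a (ereal (real k)) + ereal (- real k)"
  by (cases a) (auto simp: max_def)

context ce begin

lemma S_pos:
  assumes W: "open W" "closed W" and pE: "indicator W \<in> E" and Tp: "T (indicator W) = indicator W"
    and g: "g \<in> E" "\<And>x. 0 \<le> g x" "\<And>x. x \<notin> W \<Longrightarrow> g x = 0"
    and x0: "x0 \<notin> W"
  shows "T g x0 = 0"
proof -
  define p where "p = (indicator W :: 'k \<Rightarrow> ereal)"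
  have pW: "p x = (if x \<in> W then 1 else 0)" for x by (simp add: p_def)
  have pE': "p \<in> E" and Tp': "T p = p" using pE Tp by (auto simp: p_def)
  have pc: "continuous_on UNIV p" using Cinf_cont[OF E_Cinf[OF pE']] .
  define gm where "gm m = (\<lambda>x. min (g x) (ereal (real m)))" for m :: nat
  define dm where "dm m = (\<lambda>x. max (g x) (ereal (real m)) + ereal (- real m))" for m :: nat
  define y where "y m = (\<lambda>x. ereal (real m) * p x + ereal (-1) * gm m x)" for m :: nat
  have gC: "g \<in> Cinf" using E_Cinf[OF g(1)] .
  have gc: "continuous_on UNIV g" using Cinf_cont[OF gC] .
  have gm_fin: "fin (gm m x)" for m x using g(2)[of x] by (cases "g x") (auto simp: gm_def fin_def min_def)
  have gm_nn: "0 \<le> gm m x" for m x using g(2)[of x] by (auto simp: gm_def)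
  have gm_c: "continuous_on UNIV (gm m)" for m unfolding gm_def by (intro continuous_on_min gc continuous_on_const)
  have gm_E: "gm m \<in> E" for m
    by (rule ideal[OF g(1) Cinf_fin[OF gm_c gm_fin]]) (use g(2) in \<open>auto simp: gm_def min_def\<close>)
  have dm_nn: "0 \<le> dm m x" for m x by (cases "g x") (auto simp: dm_def max_def)
  have dm_c: "continuous_on UNIV (dm m)" for m unfolding dm_def
  proof (rule cont_add_nonneg)
    show "continuous_on UNIV (\<lambda>x. max (g x) (ereal (real m)))" by (intro continuous_on_max gc continuous_on_const)
    fix x show "max (g x) (ereal (real m)) \<noteq> - \<infinity>" by (cases "g x") (auto simp: max_def)
  qed auto
  have dm_E: "dm m \<in> E" for m
  proof (rule ideal[OF g(1) Cinf_I[OF dm_c gC]])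
    fix x show "fin (g x) \<Longrightarrow> fin (dm m x)" by (cases "g x") (auto simp: dm_def fin_def max_def)
    show "\<bar>dm m x\<bar> \<le> \<bar>g x\<bar>" using g(2)[of x] by (cases "g x") (auto simp: dm_def max_def)
  qed
  have TgE: "T g \<in> E" by (rule T_E[OF g(1)])
  have Tg: "T g x = T (gm m) x + T (dm m) x" for m x
  proof -
    have "cadd (gm m) (dm m) = (\<lambda>x. gm m x + dm m x)"
      by (rule cadd_nonneg[OF E_Cinf[OF gm_E] E_Cinf[OF dm_E] gm_nn dm_nn])
    also have "\<dots> = g"
    proof (rule ext)
      fix x show "gm m x + dm m x = g x" using g(2)[of x] by (cases "g x") (auto simp: gm_def dm_def min_def max_def)
    qed
    finally have "T g = cadd (T (gm m)) (T (dm m))" using T_add[OF gm_E dm_E] by metis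
    also have "\<dots> = (\<lambda>x. T (gm m) x + T (dm m) x)"
      by (rule cadd_nonneg[OF E_Cinf[OF T_E[OF gm_E]] E_Cinf[OF T_E[OF dm_E]]])
         (auto intro!: T_pos' gm_E dm_E gm_nn dm_nn)
    finally show ?thesis by simp
  qed
  have y_fin: "fin (y m x)" for m x using gm_fin[of m x] by (cases "gm m x") (auto simp: y_def pW fin_def)
  have y_c: "continuous_on UNIV (y m)" for m unfolding y_def
  proof (rule cont_add_fin)
    show "continuous_on UNIV (\<lambda>x. ereal (real m) * p x)" by (rule continuous_on_cmult_ereal[OF _ pc]) auto
    show "continuous_on UNIV (\<lambda>x. ereal (-1) * gm m x)" by (rule continuous_on_cmult_ereal[OF _ gm_c]) auto
    fix x show "fin (ereal (real m) * p x)" by (auto simp: pW fin_def)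
    show "fin (ereal (-1) * gm m x)" using gm_fin[of m x] by (cases "gm m x") (auto simp: fin_def)
  qed
  have y_nn: "0 \<le> y m x" for m x using g(2)[of x] g(3)[of x]
    by (cases "g x") (auto simp: y_def pW gm_def min_def)
  have y_E: "y m \<in> E" for m
  proof (rule ideal[OF cscale_E[OF cone_E, of "real m"] Cinf_fin[OF y_c y_fin]])
    fix x show "\<bar>y m x\<bar> \<le> \<bar>cscale (real m) cone x\<bar>" using g(2)[of x] g(3)[of x]
      by (cases "g x") (auto simp: y_def pW gm_def min_def cscale_def cone_def)
  qed
  have Tgm: "T (gm m) x = 0" if "x \<notin> W" for m x
  proof -
    have "cscale (real m) p = cadd (gm m) (y m)"
    proof -
      have "cadd (gm m) (y m) = (\<lambda>x. gm m x + y m x)"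
        by (rule cadd_nonneg[OF E_Cinf[OF gm_E] E_Cinf[OF y_E] gm_nn y_nn])
      also have "\<dots> = cscale (real m) p"
      proof (rule ext)
        fix x show "gm m x + y m x = cscale (real m) p x" using g(2)[of x] g(3)[of x]
          by (cases "g x"; cases "x \<in> W") (auto simp: y_def pW gm_def cscale_def min_def)
      qed
      finally show ?thesis by simp
    qed
    then have "cscale (real m) p = cadd (T (gm m)) (T (y m))"
      using T_add[OF gm_E y_E] T_scale[OF pE', of "real m"] Tp' by metis
    also have "\<dots> = (\<lambda>x. T (gm m) x + T (y m) x)"
      by (rule cadd_nonneg[OF E_Cinf[OF T_E[OF gm_E]] E_Cinf[OF T_E[OF y_E]]])
         (auto intro!: T_pos' gm_E y_E gm_nn y_nn)
    finally have "ereal (real m) * p x = T (gm m) x + T (y m) x" by (auto simp: fun_eq_iff cscale_def)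
    moreover have "p x = 0" using that by (simp add: pW)
    ultimately have "T (gm m) x + T (y m) x = 0" by simp
    moreover have "0 \<le> T (gm m) x" "0 \<le> T (y m) x" by (auto intro!: T_pos' gm_E y_E gm_nn y_nn)
    ultimately show ?thesis by (metis add_nonneg_eq_0_iff)
  qed
  define u where "u = (\<lambda>x. if x \<in> W then 0 else T g x)"
  have TgC: "T g \<in> Cinf" using E_Cinf[OF TgE] .
  have u_c: "continuous_on UNIV u" unfolding u_def
    by (rule cont_If[OF W continuous_on_const Cinf_cont[OF TgC]])
  have u_E: "u \<in> E"
  proof (rule ideal[OF TgE Cinf_I[OF u_c TgC]])
    fix x show "fin (T g x) \<Longrightarrow> fin (u x)" by (auto simp: u_def fin_def)
    show "\<bar>u x\<bar> \<le> \<bar>T g x\<bar>" by (auto simp: u_def)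
  qed
  have u_le: "u \<le> T (dm m)" for m
    unfolding le_fun_def u_def using Tg[of _ m] Tgm[of _ m] by (auto intro!: T_pos' dm_E dm_nn)
  have glb: "glb_in E (range dm) czero"
    unfolding glb_in_def
  proof (intro conjI ballI impI)
    show "czero \<in> E" by (rule czero_E)
    show "czero \<le> s" if "s \<in> range dm" for s using that dm_nn by (auto simp: czero_def le_fun_def)
    fix b assume b: "b \<in> E" "\<forall>s\<in>range dm. b \<le> s"
    show "b \<le> czero"
    proof (rule dense_le[OF Cinf_cont[OF E_Cinf[OF b(1)]] _ Cinf_fin_dense[OF gC]])
      show "continuous_on UNIV czero" by (simp add: czero_def)
      fix x assume "x \<in> {x. \<bar>g x\<bar> \<noteq> \<infinity>}"
      then obtain r where r: "g x = ereal r" by (cases "g x") auto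
      define m where "m = nat \<lceil>r\<rceil>"
      have "r \<le> real m" unfolding m_def by linarith
      then have "dm m x = 0" by (simp add: dm_def r)
      moreover have "b x \<le> dm m x" using b(2) by (auto simp: le_fun_def)
      ultimately show "b x \<le> czero x" by (simp add: czero_def)
    qed
  qed
  have dd: "down_directed (range dm)"
    unfolding down_directed_def
  proof (intro conjI ballI)
    show "range dm \<noteq> {}" by auto
    fix a b assume "a \<in> range dm" "b \<in> range dm"
    then obtain i j where ij: "a = dm i" "b = dm j" by auto
    have "dm (max i j) \<le> dm k" if "k \<le> max i j" for k unfolding le_fun_def
    proof
      fix x show "dm (max i j) x \<le> dm k x" using that unfolding dm_def by (rule dm_mono)
    qed
    then show "\<exists>c\<in>range dm. c \<le> a \<and> c \<le> b" unfolding ij by (intro bexI[of _ "dm (max i j)"]) auto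
  qed
  have "glb_in E (T ` range dm) czero"
    using T_oc dm_E glb dd unfolding order_continuous_on_def by blast
  then have "u \<le> czero" using u_E u_le unfolding glb_in_def by blast
  then have "u x0 \<le> 0" by (auto simp: le_fun_def czero_def)
  then have "T g x0 \<le> 0" using x0 by (simp add: u_def)
  moreover have "0 \<le> T g x0" by (rule T_pos'[OF g(1,2)])
  ultimately show ?thesis by (rule antisym)
qed
end



context ce begin

lemma S_signed:
  assumes K: "extremally_disconnected_space TYPE('k)"
    and W: "open W" "closed W" and pE: "indicator W \<in> E" and Tp: "T (indicator W) = indicator W"
    and g: "g \<in> E" "\<And>x. x \<notin> W \<Longrightarrow> g x = 0"
    and x0: "x0 \<notin> W"
  shows "T g x0 = 0"
proof -
  define gp where "gp = (\<lambda>x. max (g x) 0)"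
  define gn where "gn = (\<lambda>x. max (ereal (-1) * g x) 0)"
  have gC: "g \<in> Cinf" using E_Cinf[OF g(1)] .
  have gc: "continuous_on UNIV g" using Cinf_cont[OF gC] .
  have gp_c: "continuous_on UNIV gp" unfolding gp_def by (intro continuous_on_max gc continuous_on_const)
  have gn_c: "continuous_on UNIV gn" unfolding gn_def
    by (intro continuous_on_max continuous_on_const continuous_on_cmult_ereal gc) auto
  have gp_E: "gp \<in> E"
  proof (rule ideal[OF g(1) Cinf_I[OF gp_c gC]])
    fix x show "fin (g x) \<Longrightarrow> fin (gp x)" by (cases "g x") (auto simp: gp_def fin_def max_def)
    show "\<bar>gp x\<bar> \<le> \<bar>g x\<bar>" by (cases "g x") (auto simp: gp_def max_def)
  qed
  have gn_E: "gn \<in> E"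
  proof (rule ideal[OF g(1) Cinf_I[OF gn_c gC]])
    fix x show "fin (g x) \<Longrightarrow> fin (gn x)" by (cases "g x") (auto simp: gn_def fin_def max_def)
    show "\<bar>gn x\<bar> \<le> \<bar>g x\<bar>" by (cases "g x") (auto simp: gn_def max_def)
  qed
  have gp_nn: "0 \<le> gp x" for x by (simp add: gp_def)
  have gn_nn: "0 \<le> gn x" for x by (simp add: gn_def)
  have gp0: "gp x = 0" if "x \<notin> W" for x using g(2)[OF that] by (simp add: gp_def)
  have gn0: "gn x = 0" if "x \<notin> W" for x using g(2)[OF that] by (simp add: gn_def)
  have sgnE: "cscale (-1) gn \<in> E" by (rule cscale_E[OF gn_E])
  have "cadd gp (cscale (-1) gn) = g"
  proof (rule cadd_eqI[OF E_Cinf[OF gp_E] E_Cinf[OF sgnE] gc])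
    fix x assume "fin (gp x)" "fin (cscale (- 1) gn x)"
    then show "g x = gp x + cscale (- 1) gn x"
      by (cases "g x") (auto simp: gp_def gn_def cscale_def fin_def max_def)
  qed
  then have Tg: "T g = cadd (T gp) (cscale (-1) (T gn))"
    using T_add[OF gp_E sgnE] T_scale[OF gn_E, of "-1"] by metis
  have A: "T gp \<in> Cinf" by (rule E_Cinf[OF T_E[OF gp_E]])
  have B: "cscale (-1) (T gn) \<in> Cinf" using E_Cinf[OF T_E[OF sgnE]] T_scale[OF gn_E, of "-1"] by simp
  have spec: "continuous_on UNIV (T g)" "\<And>x. fin (T gp x) \<Longrightarrow> fin (cscale (-1) (T gn) x) \<Longrightarrow> T g x = T gp x + cscale (-1) (T gn) x"
    using cadd_spec[OF K A B] unfolding Tg by auto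
  define u where "u = (\<lambda>x. if x \<in> W then 0 else T g x)"
  have "u = czero"
  proof (rule dense_eq[OF _ _ Cinf_fin_set(2)[OF A B]])
    show "continuous_on UNIV u" unfolding u_def by (rule cont_If[OF W continuous_on_const spec(1)])
    show "continuous_on UNIV czero" by (simp add: czero_def)
    fix x assume x: "x \<in> {x. fin (T gp x) \<and> fin (cscale (- 1) (T gn) x)}"
    show "u x = czero x"
    proof (cases "x \<in> W")
      case True then show ?thesis by (simp add: u_def czero_def)
    next
      case False
      have "T gp x = 0" by (rule S_pos[OF W pE Tp gp_E gp_nn gp0 False])
      moreover have "T gn x = 0" by (rule S_pos[OF W pE Tp gn_E gn_nn gn0 False])
      ultimately show ?thesis using spec(2)[of x] x False by (simp add: u_def czero_def cscale_def)
    qed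
  qed
  then have "u x0 = 0" by (simp add: czero_def)
  then show ?thesis using x0 by (simp add: u_def)
qed

lemma ind_compl:
  assumes W: "open W" "closed W" and pE: "indicator W \<in> E" and Tp: "T (indicator W) = indicator W"
  shows "indicator (-W) \<in> E" "T (indicator (-W)) = indicator (-W)"
proof -
  let ?p = "indicator W :: 'k \<Rightarrow> ereal"
  let ?q = "indicator (-W) :: 'k \<Rightarrow> ereal"
  have qe: "?q = (\<lambda>x. if x \<in> -W then 1 else 0)" by (auto simp: fun_eq_iff)
  have qc: "continuous_on UNIV ?q" unfolding qe
    by (rule cont_If) (use W in auto)
  have qfin: "fin (?q x)" for x by (auto simp: fin_def indicator_def)
  show qE: "?q \<in> E"
    by (rule ideal[OF cone_E Cinf_fin[OF qc qfin]]) (auto simp: cone_def indicator_def)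
  have sE: "cscale (-1) ?p \<in> E" by (rule cscale_E[OF pE])
  have "cadd cone (cscale (-1) ?p) = ?q"
    by (rule cadd_eqI[OF E_Cinf[OF cone_E] E_Cinf[OF sE] qc]) (auto simp: cone_def cscale_def indicator_def)
  moreover have "T (cadd cone (cscale (-1) ?p)) = cadd cone (cscale (-1) ?p)"
    using T_add[OF cone_E sE] T_scale[OF pE, of "-1"] Tp T_cone by simp
  ultimately show "T ?q = ?q" by simp
qed

lemma commute:
  assumes K: "extremally_disconnected_space TYPE('k)"
    and W: "open W" "closed W" and pE: "indicator W \<in> E" and Tp: "T (indicator W) = indicator W"
    and f: "f \<in> E"
  shows "T (cind W f) = cind W (T f)"
proof -
  have W': "open (-W)" "closed (-W)" using W by auto
  note qE = ind_compl(1)[OF W pE Tp] and Tq = ind_compl(2)[OF W pE Tp]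
  have fC: "f \<in> Cinf" using E_Cinf[OF f] .
  have cE: "cind V f \<in> E" if "open V" "closed V" for V
  proof (rule ideal[OF f Cinf_I[OF cont_cind[OF that Cinf_cont[OF fC]] fC]])
    fix x show "fin (f x) \<Longrightarrow> fin (cind V f x)" by (auto simp: cind_If fin_def)
    show "\<bar>cind V f x\<bar> \<le> \<bar>f x\<bar>" by (auto simp: cind_If)
  qed
  have pfE: "cind W f \<in> E" by (rule cE[OF W])
  have qfE: "cind (-W) f \<in> E" by (rule cE[OF W'])
  have "cadd (cind W f) (cind (-W) f) = f"
    by (rule cadd_eqI[OF E_Cinf[OF pfE] E_Cinf[OF qfE] Cinf_cont[OF fC]]) (auto simp: cind_If)
  then have Tf: "T f = cadd (T (cind W f)) (T (cind (-W) f))" using T_add[OF pfE qfE] by metis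
  have A: "T (cind W f) \<in> Cinf" by (rule E_Cinf[OF T_E[OF pfE]])
  have B: "T (cind (-W) f) \<in> Cinf" by (rule E_Cinf[OF T_E[OF qfE]])
  have spec: "\<And>x. fin (T (cind W f) x) \<Longrightarrow> fin (T (cind (-W) f) x) \<Longrightarrow> T f x = T (cind W f) x + T (cind (-W) f) x"
    using cadd_spec[OF K A B] unfolding Tf[symmetric] by auto
  have zp: "T (cind W f) x = 0" if "x \<notin> W" for x
    by (rule S_signed[OF K W pE Tp pfE _ that]) (auto simp: cind_If)
  have zq: "T (cind (-W) f) x = 0" if "x \<in> W" for x
    by (rule S_signed[OF K W' qE Tq qfE]) (use that in \<open>auto simp: cind_If\<close>)
  show ?thesis
  proof (rule dense_eq[OF Cinf_cont[OF A] _ Cinf_fin_set(2)[OF A B]])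
    show "continuous_on UNIV (cind W (T f))" by (rule cont_cind[OF W Cinf_cont[OF E_Cinf[OF T_E[OF f]]]])
    fix x assume x: "x \<in> {x. fin (T (cind W f) x) \<and> fin (T (cind (- W) f) x)}"
    show "T (cind W f) x = cind W (T f) x"
    proof (cases "x \<in> W")
      case True then show ?thesis using spec[of x] x zq[OF True] by (simp add: cind_If)
    next
      case False then show ?thesis using zp[OF False] by (simp add: cind_If)
    qed
  qed
qed

end



lemma cont_ind:
  assumes "open V" "closed V"
  shows "continuous_on UNIV (indicator V :: 'k::topological_space \<Rightarrow> ereal)"
proof -
  have "(indicator V :: 'k \<Rightarrow> ereal) = (\<lambda>x. if x \<in> V then 1 else 0)" by (auto simp: fun_eq_iff)
  then show ?thesis using cont_If[OF assms, of "\<lambda>_. 1" "\<lambda>_. 0"] by simp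
qed

lemma (in ce) ind_E:
  assumes "open V" "closed V"
  shows "(indicator V :: 'k \<Rightarrow> ereal) \<in> E"
  by (rule ideal[OF cone_E Cinf_fin[OF cont_ind[OF assms]]]) (auto simp: fin_def cone_def indicator_def)

lemma filt_ce: "filtration E F \<Longrightarrow> MO_space E \<Longrightarrow> ce E (F i)"
  by (auto simp: filtration_def ce_def)

lemma part2:
  fixes E :: "('k::t2_space \<Rightarrow> ereal) set"
    and F :: "nat \<Rightarrow> ('k \<Rightarrow> ereal) \<Rightarrow> ('k \<Rightarrow> ereal)"
  assumes K: "extremally_disconnected_space TYPE('k)"
    and E: "MO_space E"
    and F: "filtration E F"
    and tau: "\<tau> \<in> sup_completion E"
    and vals: "\<forall>x. \<tau> x = \<infinity> \<or> (\<exists>n::nat. n \<ge> 1 \<and> \<tau> x = ereal (real n))"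
    and meas: "\<forall>n::nat. n \<ge> 1 \<longrightarrow> indicator {x. \<tau> x = ereal (real n)} \<in> F n ` E"
  shows "stopping_time E F (\<lambda>n f. if n = 0 then czero else cind {x. \<tau> x \<le> ereal (real n)} f)"
proof -
  interpret ce0: ce E "F 0" by (rule filt_ce[OF F E])
  have ceF: "ce E (F j)" for j by (rule filt_ce[OF F E])
  have tc: "continuous_on UNIV \<tau>" using tau by (simp add: sup_completion_def)
  define L where "L i = {x. \<tau> x \<le> ereal (real i)}" for i :: nat
  have Lcl: "closed (L i)" for i unfolding L_def by (rule closed_Collect_le[OF tc continuous_on_const])
  have Lop: "open (L i)" for i
  proof -
    have "L i = {x. \<tau> x < ereal (real i + 1/2)}"
    proof (rule set_eqI)
      fix x show "x \<in> L i \<longleftrightarrow> x \<in> {x. \<tau> x < ereal (real i + 1/2)}"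
        using vals[rule_format, of x] unfolding L_def by auto
    qed
    then show ?thesis using open_Collect_less[OF tc continuous_on_const] by simp
  qed
  have filt: "F t (F s f) = F s f" if "s \<le> t" "f \<in> E" for s t f
    using F that unfolding filtration_def by metis
  have indL: "indicator (L i) \<in> E \<and> F j (indicator (L i)) = indicator (L i)" if "i \<le> j" for i j
    using that
  proof (induction i)
    case 0
    have "L 0 = {}"
    proof (rule set_eqI)
      fix x show "x \<in> L 0 \<longleftrightarrow> x \<in> {}" using vals[rule_format, of x] unfolding L_def by auto
    qed
    then have "(indicator (L 0) :: 'k \<Rightarrow> ereal) = czero" by (auto simp: czero_def fun_eq_iff)
    then show ?case using ce.T_zero[OF ceF] ce0.czero_E by simp
  next
    case (Suc i)
    then have IH: "indicator (L i) \<in> E" "F j (indicator (L i)) = indicator (L i)" by auto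
    obtain e0 where e0: "e0 \<in> E" "indicator {x. \<tau> x = ereal (real (Suc i))} = F (Suc i) e0"
      using meas by (metis One_nat_def Suc_le_mono image_iff zero_le)
    let ?e = "indicator {x. \<tau> x = ereal (real (Suc i))} :: 'k \<Rightarrow> ereal"
    have eE: "?e \<in> E" using e0 ce.T_E[OF ceF] by simp
    have Fe: "F j ?e = ?e" using e0 filt[OF Suc.prems e0(1)] by simp
    have "cadd (indicator (L i)) ?e = (\<lambda>x. indicator (L i) x + ?e x)"
      by (rule cadd_nonneg[OF ce0.E_Cinf[OF IH(1)] ce0.E_Cinf[OF eE]]) auto
    also have "\<dots> = indicator (L (Suc i))"
    proof (rule ext)
      fix x show "indicator (L i) x + ?e x = (indicator (L (Suc i)) x :: ereal)"
        using vals[rule_format, of x] unfolding L_def by (auto simp: indicator_def)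
    qed
    finally have eq: "cadd (indicator (L i)) ?e = indicator (L (Suc i))" .
    show ?case
      using eq ce0.cadd_E[OF IH(1) eE] ce.T_add[OF ceF IH(1) eE] IH(2) Fe by simp
  qed
  show ?thesis
    unfolding stopping_time_def
  proof (intro conjI allI impI ballI)
    fix i
    show "band_projection E (\<lambda>f. if i = 0 then czero else cind {x. \<tau> x \<le> ereal (real i)} f)"
      unfolding band_projection_def
    proof (cases "i = 0")
      case True
      then show "\<exists>W. open W \<and> closed W \<and> (\<forall>f\<in>E. (if i = 0 then czero else cind {x. \<tau> x \<le> ereal (real i)} f) = cind W f)"
        by (intro exI[of _ "{}"]) (auto simp: cind_If czero_def)
    next
      case False
      then show "\<exists>W. open W \<and> closed W \<and> (\<forall>f\<in>E. (if i = 0 then czero else cind {x. \<tau> x \<le> ereal (real i)} f) = cind W f)"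
        using Lop Lcl unfolding L_def by (intro exI[of _ "L i"]) (auto simp: L_def)
    qed
  next
    fix i j :: nat and f assume "i \<le> j \<and> f \<in> E \<and> czero \<le> f"
    then have ij: "i \<le> j" and fnn: "\<And>x. 0 \<le> f x" by (auto simp: le_fun_def czero_def)
    show "(if i = 0 then czero else cind {x. \<tau> x \<le> ereal (real i)} f) \<le> (if j = 0 then czero else cind {x. \<tau> x \<le> ereal (real j)} f)"
      unfolding le_fun_def
    proof
      fix x
      have "\<tau> x \<le> ereal (real i) \<Longrightarrow> \<tau> x \<le> ereal (real j)" using ij by (meson ereal_less_eq(3) of_nat_le_iff order_trans)
      then show "(if i = 0 then czero else cind {x. \<tau> x \<le> ereal (real i)} f) x \<le> (if j = 0 then czero else cind {x. \<tau> x \<le> ereal (real j)} f) x"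
        using ij fnn[of x] by (auto simp: cind_If czero_def)
    qed
  next
    fix f :: "'k \<Rightarrow> ereal" assume "f \<in> E"
    show "(if (0::nat) = 0 then czero else cind {x. \<tau> x \<le> ereal (real 0)} f) = czero" by simp
  next
    fix i j :: nat and f assume a: "i \<le> j \<and> f \<in> E"
    show "F j (if i = 0 then czero else cind {x. \<tau> x \<le> ereal (real i)} f) = (if i = 0 then czero else cind {x. \<tau> x \<le> ereal (real i)} (F j f))"
    proof (cases "i = 0")
      case True then show ?thesis using ce.T_zero[OF ceF] by simp
    next
      case False
      have "F j (cind (L i) f) = cind (L i) (F j f)"
        using ce.commute[OF ceF K Lop Lcl] indL[of i j] a by blast
      then show ?thesis using False by (simp add: L_def)
    qed
  qed
qed




lemma part1:
  fixes E :: "('k::t2_space \<Rightarrow> ereal) set"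
    and F :: "nat \<Rightarrow> ('k \<Rightarrow> ereal) \<Rightarrow> ('k \<Rightarrow> ereal)"
  assumes K: "extremally_disconnected_space TYPE('k)"
    and E: "MO_space E"
    and F: "filtration E F"
    and P: "stopping_time E F P"
  shows "\<exists>\<tau>\<in>sup_completion E.
               (\<forall>x. \<tau> x = \<infinity> \<or> (\<exists>n::nat. n \<ge> 1 \<and> \<tau> x = ereal (real n))) \<and>
               (\<forall>n::nat. n \<ge> 1 \<longrightarrow>
                  open {x. \<tau> x = ereal (real n)} \<and> closed {x. \<tau> x = ereal (real n)} \<and>
                  indicator {x. \<tau> x = ereal (real n)} \<in> F n ` E) \<and>
               (\<forall>n::nat. \<forall>f\<in>E. P n f = cind {x. \<tau> x \<le> ereal (real n)} f)"
proof -
  interpret ce0: ce E "F 0" by (rule filt_ce[OF F E])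
  have ceF: "ce E (F j)" for j by (rule filt_ce[OF F E])
  have "\<forall>i. \<exists>W. open W \<and> closed W \<and> (\<forall>f\<in>E. P i f = cind W f)"
    using P unfolding stopping_time_def band_projection_def by blast
  then obtain W where W: "\<And>i. open (W i)" "\<And>i. closed (W i)" "\<And>i f. f \<in> E \<Longrightarrow> P i f = cind (W i) f"
    by metis
  have Pc: "P i cone = indicator (W i)" for i
    using W(3)[OF ce0.cone_E] by (auto simp: cind_def cone_def fun_eq_iff)
  have W0: "W 0 = {}"
  proof -
    have "P 0 cone = czero" using P ce0.cone_E unfolding stopping_time_def by blast
    then have "(indicator (W 0) :: 'k \<Rightarrow> ereal) = czero" using Pc by simp
    then show ?thesis by (auto simp: czero_def fun_eq_iff indicator_def split: if_splits)
  qed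
  have Wmono: "W i \<subseteq> W j" if "i \<le> j" for i j
  proof
    fix x assume x: "x \<in> W i"
    have "P i cone \<le> P j cone" using P ce0.cone_E that unfolding stopping_time_def
      by (auto simp: czero_def cone_def le_fun_def)
    then have "(indicator (W i) x :: ereal) \<le> indicator (W j) x" using Pc by (auto simp: le_fun_def)
    then show "x \<in> W j" using x by (cases "x \<in> W j") auto
  qed
  define \<tau> where "\<tau> x = (if \<exists>n. x \<in> W n then ereal (real (LEAST n. x \<in> W n)) else \<infinity>)" for x
  have tle: "\<tau> x \<le> ereal (real n) \<longleftrightarrow> x \<in> W n" for x n
  proof (cases "\<exists>n. x \<in> W n")
    case True
    let ?l = "LEAST n. x \<in> W n"
    have l: "x \<in> W ?l" using True by (metis LeastI)
    have "?l \<le> n \<longleftrightarrow> x \<in> W n" using l Wmono by (metis Least_le subsetD)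
    then show ?thesis using True by (simp add: \<tau>_def)
  next
    case False then show ?thesis by (simp add: \<tau>_def)
  qed
  have vals: "\<tau> x = \<infinity> \<or> (\<exists>n::nat. n \<ge> 1 \<and> \<tau> x = ereal (real n))" for x
  proof (cases "\<exists>n. x \<in> W n")
    case True
    let ?l = "LEAST n. x \<in> W n"
    have l: "x \<in> W ?l" using True by (metis LeastI)
    then have "?l \<ge> 1" using W0 by (cases ?l) auto
    then show ?thesis using True by (auto simp: \<tau>_def)
  next
    case False then show ?thesis by (simp add: \<tau>_def)
  qed
  have teq: "{x. \<tau> x = ereal (real n)} = W n - W (n - 1)" if "n \<ge> 1" for n
  proof (rule set_eqI)
    fix x
    show "x \<in> {x. \<tau> x = ereal (real n)} \<longleftrightarrow> x \<in> W n - W (n - 1)"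
      using vals[of x] tle[of x n] tle[of x "n - 1"] that by auto
  qed
  have tleset: "{x. \<tau> x \<le> ereal (real n)} = W n" for n using tle by auto
  have tc: "continuous_on UNIV \<tau>"
  proof (rule cont_order)
    fix a
    have "{x. \<tau> x < a} = (\<Union>n\<in>{n. ereal (real n) < a}. W n)"
    proof (rule set_eqI)
      fix x show "x \<in> {x. \<tau> x < a} \<longleftrightarrow> x \<in> (\<Union>n\<in>{n. ereal (real n) < a}. W n)"
      proof
        assume "x \<in> {x. \<tau> x < a}"
        then obtain n where "\<tau> x = ereal (real n)" "ereal (real n) < a" using vals[of x] by auto
        then show "x \<in> (\<Union>n\<in>{n. ereal (real n) < a}. W n)" using tle[of x n] by auto
      next
        assume "x \<in> (\<Union>n\<in>{n. ereal (real n) < a}. W n)"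
        then obtain n where "ereal (real n) < a" "x \<in> W n" by auto
        then show "x \<in> {x. \<tau> x < a}" using tle[of x n] by auto
      qed
    qed
    moreover have "open (\<Union>n\<in>{n. ereal (real n) < a}. W n)" by (intro open_UN ballI W(1))
    ultimately show "open {x. \<tau> x < a}" by simp
    show "open {x. a < \<tau> x}"
    proof (cases "a = \<infinity>")
      case True then show ?thesis by simp
    next
      case False
      have fin: "finite {n::nat. ereal (real n) \<le> a}"
      proof (cases a)
        case (real r)
        have "{n::nat. ereal (real n) \<le> a} \<subseteq> {..nat \<lceil>r\<rceil>}" using real by auto linarith
        then show ?thesis by (rule finite_subset) simp
      qed (use False in auto)
      have "{x. a < \<tau> x} = (\<Inter>n\<in>{n. ereal (real n) \<le> a}. - W n)"
      proof (rule set_eqI)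
        fix x show "x \<in> {x. a < \<tau> x} \<longleftrightarrow> x \<in> (\<Inter>n\<in>{n. ereal (real n) \<le> a}. - W n)"
        proof
          assume ax: "x \<in> {x. a < \<tau> x}"
          show "x \<in> (\<Inter>n\<in>{n. ereal (real n) \<le> a}. - W n)"
          proof (intro INT_I ComplI)
            fix n assume "n \<in> {n. ereal (real n) \<le> a}" "x \<in> W n"
            then have "\<tau> x \<le> a" using tle[of x n] by auto
            then show False using ax by auto
          qed
        next
          assume A: "x \<in> (\<Inter>n\<in>{n. ereal (real n) \<le> a}. - W n)"
          show "x \<in> {x. a < \<tau> x}"
          proof (cases "\<tau> x = \<infinity>")
            case True then show ?thesis using False by (simp add: less_le)
          next
            case nf: False
            then obtain n where n: "\<tau> x = ereal (real n)" using vals[of x] by auto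
            then have "x \<in> W n" using tle[of x n] by simp
            then have "\<not> ereal (real n) \<le> a" using A by auto
            then show ?thesis using n by simp
          qed
        qed
      qed
      moreover have "open (\<Inter>n\<in>{n. ereal (real n) \<le> a}. - W n)"
        by (intro open_INT fin ballI open_Compl W(2))
      ultimately show ?thesis by simp
    qed
  qed
  have tsc: "\<tau> \<in> sup_completion E"
    unfolding sup_completion_def
  proof (intro CollectI conjI bexI[of _ cone])
    show "continuous_on UNIV \<tau>" by (rule tc)
    show "cone \<in> E" by (rule ce0.cone_E)
    show "cone \<le> \<tau>" unfolding le_fun_def cone_def
    proof
      fix x show "1 \<le> \<tau> x" using vals[of x] by auto
    qed
  qed
  have ind_meas: "indicator {x. \<tau> x = ereal (real n)} \<in> F n ` E" if n1: "n \<ge> 1" for n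
  proof -
    have Fk: "F n (indicator (W k)) = indicator (W k)" if "k \<le> n" for k
    proof -
      have "F n (P k cone) = P k (F n cone)" using P ce0.cone_E that unfolding stopping_time_def by blast
      then show ?thesis using ce.T_cone[OF ceF] Pc by simp
    qed
    let ?a = "indicator (W n) :: 'k \<Rightarrow> ereal"
    let ?b = "indicator (W (n - 1)) :: 'k \<Rightarrow> ereal"
    let ?c = "indicator (W n - W (n - 1)) :: 'k \<Rightarrow> ereal"
    have aE: "?a \<in> E" by (rule ce0.ind_E[OF W(1,2)])
    have bE: "?b \<in> E" by (rule ce0.ind_E[OF W(1,2)])
    have sbE: "cscale (-1) ?b \<in> E" by (rule ce0.cscale_E[OF bE])
    have cE: "?c \<in> E" using W by (intro ce0.ind_E) auto
    have sub: "W (n - 1) \<subseteq> W n" by (rule Wmono) simp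
    have "cadd ?a (cscale (-1) ?b) = ?c"
      by (rule cadd_eqI[OF ce0.E_Cinf[OF aE] ce0.E_Cinf[OF sbE] Cinf_cont[OF ce0.E_Cinf[OF cE]]])
         (use sub in \<open>auto simp: cscale_def indicator_def\<close>)
    moreover have "F n (cadd ?a (cscale (-1) ?b)) = cadd ?a (cscale (-1) ?b)"
      using ce.T_add[OF ceF aE sbE] ce.T_scale[OF ceF bE] Fk[of n] Fk[of "n - 1"] by simp
    ultimately have "?c = F n ?c" by simp
    then show ?thesis using cE teq[OF n1] by (metis image_eqI)
  qed
  show ?thesis
  proof (rule bexI[OF _ tsc], intro conjI allI impI ballI)
    fix x show "\<tau> x = \<infinity> \<or> (\<exists>n::nat. n \<ge> 1 \<and> \<tau> x = ereal (real n))" by (rule vals)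
  next
    fix n :: nat assume n1: "n \<ge> 1"
    show "open {x. \<tau> x = ereal (real n)}" unfolding teq[OF n1] using W by auto
    show "closed {x. \<tau> x = ereal (real n)}" unfolding teq[OF n1] using W by auto
    show "indicator {x. \<tau> x = ereal (real n)} \<in> F n ` E" by (rule ind_meas[OF n1])
  next
    fix n :: nat and f assume "f \<in> E"
    then show "P n f = cind {x. \<tau> x \<le> ereal (real n)} f" using W(3) tleset by simp
  qed
qed


theorem mainTheorem12:
  fixes E :: "('k::t2_space \<Rightarrow> ereal) set"
    and F :: "nat \<Rightarrow> ('k \<Rightarrow> ereal) \<Rightarrow> ('k \<Rightarrow> ereal)"
  assumes K: "extremally_disconnected_space TYPE('k)"
    and E: "MO_space E"
    and F: "filtration E F"
  shows "(\<forall>P. stopping_time E F P \<longrightarrow>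
            (\<exists>\<tau>\<in>sup_completion E.
               (\<forall>x. \<tau> x = \<infinity> \<or> (\<exists>n::nat. n \<ge> 1 \<and> \<tau> x = ereal (real n))) \<and>
               (\<forall>n::nat. n \<ge> 1 \<longrightarrow>
                  open {x. \<tau> x = ereal (real n)} \<and> closed {x. \<tau> x = ereal (real n)} \<and>
                  indicator {x. \<tau> x = ereal (real n)} \<in> F n ` E) \<and>
               (\<forall>n::nat. \<forall>f\<in>E. P n f = cind {x. \<tau> x \<le> ereal (real n)} f)))
       \<and>
         (\<forall>\<tau>\<in>sup_completion E.
            (\<forall>x. \<tau> x = \<infinity> \<or> (\<exists>n::nat. n \<ge> 1 \<and> \<tau> x = ereal (real n))) \<and>
            (\<forall>n::nat. n \<ge> 1 \<longrightarrow> indicator {x. \<tau> x = ereal (real n)} \<in> F n ` E)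
            \<longrightarrow> stopping_time E F
                  (\<lambda>n f. if n = 0 then czero else cind {x. \<tau> x \<le> ereal (real n)} f))"
    using part1[OF assms] part2[OF assms] by blast

end
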